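(* Let $a\in(0,1)$ and $\theta>0$ be as in the context and write $\Gamma=\Gamma(\zeta+1)$. Then for all $t>0$: for $\zeta>0$: $\dfrac{\Gamma}{a^{-\zeta}-1}\le h^{(1,\zeta)}_t\le\dfrac{a^{-\zeta}\Gamma}{a^{-\zeta}-1}$; for $-1<\zeta<0$: $\dfrac{a^{-\zeta}\Gamma}{1-a^{-\zeta}}\le h^{(2,\zeta)}_t\le\dfrac{\Gamma}{1-a^{-\zeta}}$; $\dfrac{a^{-\zeta}(2-2^{-\zeta})\Gamma}{1-a^{-\zeta}}\le h^{(3,\zeta)}_t\le\dfrac{(2-2^{-\zeta})\Gamma}{1-a^{-\zeta}}$; $\dfrac{a^{-\zeta}\Gamma}{(1-a^{-\zeta})(1-\zeta)}\le\tilde h^{(2,\zeta)}_t\le\dfrac{\Gamma}{(1-a^{-\zeta})(1-\zeta)}$; $\dfrac{a^{-\zeta}(2-2^{-\zeta})\Gamma}{(1-a^{-\zeta})(1-\zeta)}\le\tilde h^{(3,\zeta)}_t\le\dfrac{(2-2^{-\zeta})\Gamma}{(1-a^{-\zeta})(1-\zeta)}$.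
   Context: Let $N\ge2$, $0<c<N$, $\sigma>0$, $a=c/N$, $\theta=\sigma(N^2/c-1)/(N-1)$. For $t>0$: for $\zeta>0$, $h^{(1,\zeta)}_t=\sum_{j\in\mathbb Z}(\theta a^jt)^\zeta e^{-\theta a^jt}$; for $-1<\zeta<0$, $h^{(2,\zeta)}_t=\sum_{j\in\mathbb Z}(\theta a^jt)^\zeta(1-e^{-\theta a^jt})$, $h^{(3,\zeta)}_t=\sum_{j\in\mathbb Z}(\theta a^jt)^\zeta(1-e^{-\theta a^jt})^2$, $\tilde h^{(2,\zeta)}_t=\sum_{j\in\mathbb Z}(\theta a^jt)^{\zeta-1}(e^{-\theta a^jt}-1+\theta a^jt)$, $\tilde h^{(3,\zeta)}_t=\sum_{j\in\mathbb Z}(\theta a^jt)^{\zeta-1}(2e^{-\theta a^jt}-\frac12e^{-2\theta a^jt}+\theta a^jt-\frac32)$. *)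

theory Defs
  imports "HOL-Analysis.Analysis"
begin

definition h1 :: "real \<Rightarrow> real \<Rightarrow> real \<Rightarrow> real \<Rightarrow> real" where
  "h1 a \<theta> \<zeta> t = (\<Sum>\<^sub>\<infinity>j::int. (\<theta> * a powi j * t) powr \<zeta> * exp (- (\<theta> * a powi j * t)))"

definition h2 :: "real \<Rightarrow> real \<Rightarrow> real \<Rightarrow> real \<Rightarrow> real" where
  "h2 a \<theta> \<zeta> t = (\<Sum>\<^sub>\<infinity>j::int. (\<theta> * a powi j * t) powr \<zeta> * (1 - exp (- (\<theta> * a powi j * t))))"

definition h3 :: "real \<Rightarrow> real \<Rightarrow> real \<Rightarrow> real \<Rightarrow> real" where
  "h3 a \<theta> \<zeta> t = (\<Sum>\<^sub>\<infinity>j::int. (\<theta> * a powi j * t) powr \<zeta> * (1 - exp (- (\<theta> * a powi j * t)))\<^sup>2)"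

definition ht2 :: "real \<Rightarrow> real \<Rightarrow> real \<Rightarrow> real \<Rightarrow> real" where
  "ht2 a \<theta> \<zeta> t = (\<Sum>\<^sub>\<infinity>j::int. (\<theta> * a powi j * t) powr (\<zeta> - 1) *
      (exp (- (\<theta> * a powi j * t)) - 1 + \<theta> * a powi j * t))"

definition ht3 :: "real \<Rightarrow> real \<Rightarrow> real \<Rightarrow> real \<Rightarrow> real" where
  "ht3 a \<theta> \<zeta> t = (\<Sum>\<^sub>\<infinity>j::int. (\<theta> * a powi j * t) powr (\<zeta> - 1) *
      (2 * exp (- (\<theta> * a powi j * t)) - 1/2 * exp (- 2 * (\<theta> * a powi j * t))
       + \<theta> * a powi j * t - 3/2))"

end

theory Submission
  imports Defs
begin

lemma infsum_bounds_from_nn: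
  fixes f :: "int \<Rightarrow> real"
  assumes nn: "\<And>j. 0 \<le> f j"
    and lo: "ennreal L \<le> (\<integral>\<^sup>+j. ennreal (f j) \<partial>count_space UNIV)"
    and up: "(\<integral>\<^sup>+j. ennreal (f j) \<partial>count_space UNIV) \<le> ennreal U"
    and L: "0 \<le> L" and U: "0 \<le> U"
  shows "L \<le> infsum f UNIV \<and> infsum f UNIV \<le> U"
proof -
  define N where "N = (\<integral>\<^sup>+j. ennreal (f j) \<partial>count_space UNIV)"
  have Ntop: "N < top" using up unfolding N_def[symmetric]
    using ennreal_less_top le_less_trans by blast
  define r where "r = enn2real N"
  have r0: "0 \<le> r" by (simp add: r_def)
  have Nr: "N = ennreal r" using Ntop by (simp add: r_def)
  have int: "integrable (count_space UNIV) f"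
    by (rule integrableI_nn_integral_finite[where x=r]) (auto simp: nn Nr[unfolded N_def])
  hence abs: "Infinite_Set_Sum.abs_summable_on f UNIV" by (simp add: abs_summable_on_def)
  have "ennreal (infsetsum f UNIV) = N"
    unfolding N_def using nn_integral_conv_infsetsum[OF abs] nn by simp
  hence "infsetsum f UNIV = r" using Nr r0 infsetsum_nonneg[of UNIV f] nn
    by (simp add: ennreal_inj)
  hence eq: "infsum f UNIV = r" using infsetsum_infsum[OF abs] by simp
  have "L \<le> r" using lo r0 unfolding N_def[symmetric] Nr by simp
  moreover have "r \<le> U" using up U unfolding N_def[symmetric] Nr by simp
  ultimately show ?thesis using eq by simp
qed

lemma geo_down_sum:
  fixes J :: int and q w :: real
  assumes q: "0 \<le> q" "q < 1" and w: "0 \<le> w"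
  shows "(\<integral>\<^sup>+j. ennreal (w * q ^ nat (J - j)) * indicator {..J} j \<partial>count_space UNIV) = ennreal (w / (1 - q))"
proof -
  have bij: "bij_betw (\<lambda>k::nat. J - int k) UNIV {..J}"
    by (rule bij_betwI[where g="\<lambda>j. nat (J - j)"]) auto
  have "(\<integral>\<^sup>+j. ennreal (w * q ^ nat (J - j)) * indicator {..J} j \<partial>count_space UNIV)
      = (\<integral>\<^sup>+j. ennreal (w * q ^ nat (J - j)) \<partial>count_space {..J})"
    by (simp add: nn_integral_count_space_indicator)
  also have "\<dots> = (\<integral>\<^sup>+k. ennreal (w * q ^ nat (J - (J - int k))) \<partial>count_space UNIV)"
    by (rule nn_integral_bij_count_space[OF bij, symmetric])
  also have "\<dots> = (\<integral>\<^sup>+k. ennreal (w * q ^ k) \<partial>count_space UNIV)" by simp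
  also have "\<dots> = (\<Sum>k. ennreal (w * q ^ k))" by (rule nn_integral_count_space_nat)
  also have "\<dots> = ennreal (\<Sum>k. w * q ^ k)"
    using q w by (intro suminf_ennreal2) (auto intro!: summable_mult)
  also have "(\<Sum>k. w * q ^ k) = w / (1 - q)"
    using q by (simp add: suminf_mult suminf_geometric)
  finally show ?thesis .
qed

lemma geo_up_sum:
  fixes J :: int and q w :: real
  assumes q: "0 \<le> q" "q < 1" and w: "0 \<le> w"
  shows "(\<integral>\<^sup>+j. ennreal (w * q ^ nat (j - J)) * indicator {J..} j \<partial>count_space UNIV) = ennreal (w / (1 - q))"
proof -
  have bij: "bij_betw (\<lambda>k::nat. J + int k) UNIV {J..}"
    by (rule bij_betwI[where g="\<lambda>j. nat (j - J)"]) auto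
  have "(\<integral>\<^sup>+j. ennreal (w * q ^ nat (j - J)) * indicator {J..} j \<partial>count_space UNIV)
      = (\<integral>\<^sup>+j. ennreal (w * q ^ nat (j - J)) \<partial>count_space {J..})"
    by (simp add: nn_integral_count_space_indicator)
  also have "\<dots> = (\<integral>\<^sup>+k. ennreal (w * q ^ nat ((J + int k) - J)) \<partial>count_space UNIV)"
    by (rule nn_integral_bij_count_space[OF bij, symmetric])
  also have "\<dots> = (\<integral>\<^sup>+k. ennreal (w * q ^ k) \<partial>count_space UNIV)" by simp
  also have "\<dots> = (\<Sum>k. ennreal (w * q ^ k))" by (rule nn_integral_count_space_nat)
  also have "\<dots> = ennreal (\<Sum>k. w * q ^ k)"
    using q w by (intro suminf_ennreal2) (auto intro!: summable_mult)
  also have "(\<Sum>k. w * q ^ k) = w / (1 - q)"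
    using q by (simp add: suminf_mult suminf_geometric)
  finally show ?thesis .
qed

lemma exp_form:
  fixes x a :: real and j :: int
  assumes "0 < x" "0 < a"
  shows "x * a powi j = exp (ln x + of_int j * ln a)"
proof -
  have "a powi j = a powr of_int j" using assms by (simp add: powr_real_of_int')
  thus ?thesis using assms by (simp add: exp_add powr_def mult.commute)
qed

lemma exp_form_powr:
  fixes x a \<zeta> :: real and j :: int
  assumes "0 < x" "0 < a"
  shows "(x * a powi j) powr \<zeta> = exp (\<zeta> * (ln x + of_int j * ln a))"
  using assms by (simp add: exp_form powr_def)

lemma le_exp_iff_ln: "0 < (y::real) \<Longrightarrow> y \<le> exp s \<longleftrightarrow> ln y \<le> s"
  by (metis exp_le_cancel_iff exp_ln)

lemma exp_le_iff_ln: "0 < (y::real) \<Longrightarrow> exp s \<le> y \<longleftrightarrow> s \<le> ln y"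
  by (metis exp_le_cancel_iff exp_ln)

lemma inner_down:
  fixes a x y \<zeta> :: real
  assumes a: "0 < a" "a < 1" and x: "0 < x" and y: "0 < y" and z: "\<zeta> < 0"
  shows "\<exists>v. a powr (-\<zeta>) * y powr \<zeta> \<le> v \<and> v \<le> y powr \<zeta> \<and>
     (\<integral>\<^sup>+j. ennreal ((x * a powi j) powr \<zeta>) * indicator {0..x * a powi j} y \<partial>count_space UNIV)
       = ennreal (v / (1 - a powr (-\<zeta>)))"
proof -
  define l where "l = ln a"
  have l: "l < 0" using a by (simp add: l_def)
  define J where "J = \<lfloor>(ln y - ln x) / l\<rfloor>"
  have key: "y \<le> x * a powi j \<longleftrightarrow> j \<le> J" for j
  proof -
    have "y \<le> x * a powi j \<longleftrightarrow> ln y \<le> ln x + of_int j * l"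
      using x y a by (simp add: exp_form l_def le_exp_iff_ln)
    also have "\<dots> \<longleftrightarrow> of_int j \<le> (ln y - ln x) / l"
      using l by (simp add: neg_le_divide_eq algebra_simps)
    also have "\<dots> \<longleftrightarrow> j \<le> J" by (simp add: J_def le_floor_iff)
    finally show ?thesis .
  qed
  define A where "A = a powr (-\<zeta>)"
  have Aexp: "A = exp (- \<zeta> * l)" using a by (simp add: A_def powr_def l_def)
  have A0: "0 < A" by (simp add: Aexp)
  have "0 < \<zeta> * l" using z l by (simp add: mult_neg_neg)
  hence A1: "A < 1" unfolding Aexp by simp
  define w where "w = exp (\<zeta> * (ln x + of_int J * l))"
  have trm: "(x * a powi j) powr \<zeta> = w * A ^ nat (J - j)" if "j \<le> J" for j
  proof -
    have rn: "real (nat (J - j)) = of_int J - of_int j" using that by simp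
    have Ap: "A ^ nat (J - j) = exp ((of_int J - of_int j) * (- \<zeta> * l))"
      unfolding Aexp using exp_of_nat_mult[of "nat (J - j)" "- \<zeta> * l"] rn by simp
    have "w * A ^ nat (J - j) = exp (\<zeta> * (ln x + of_int J * l) + (of_int J - of_int j) * (- \<zeta> * l))"
      unfolding w_def Ap exp_add by simp
    also have "\<zeta> * (ln x + of_int J * l) + (of_int J - of_int j) * (- \<zeta> * l) = \<zeta> * (ln x + of_int j * l)"
      by (simp add: algebra_simps)
    finally show ?thesis using x a by (simp add: exp_form_powr l_def)
  qed
  have "(\<integral>\<^sup>+j. ennreal ((x * a powi j) powr \<zeta>) * indicator {0..x * a powi j} y \<partial>count_space UNIV)
      = (\<integral>\<^sup>+j. ennreal (w * A ^ nat (J - j)) * indicator {..J} j \<partial>count_space UNIV)"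
  proof (rule nn_integral_cong)
    fix j :: int
    show "ennreal ((x * a powi j) powr \<zeta>) * indicator {0..x * a powi j} y
        = ennreal (w * A ^ nat (J - j)) * indicator {..J} j"
      using key[of j] trm[of j] y by (auto simp: indicator_def)
  qed
  also have "\<dots> = ennreal (w / (1 - A))"
    using A0 A1 by (intro geo_down_sum) (auto simp: w_def)
  finally have eq: "(\<integral>\<^sup>+j. ennreal ((x * a powi j) powr \<zeta>) * indicator {0..x * a powi j} y \<partial>count_space UNIV)
      = ennreal (w / (1 - A))" .
  have yz: "y powr \<zeta> = exp (\<zeta> * ln y)" using y by (simp add: powr_def)
  have kJ: "ln y \<le> ln x + of_int J * l"
    using key[of J] x y a by (simp add: exp_form l_def le_exp_iff_ln)
  have kJ1: "\<not> ln y \<le> ln x + of_int (J + 1) * l"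
    using key[of "J+1"] x y a by (simp add: exp_form l_def le_exp_iff_ln)
  have "\<zeta> * (ln x + of_int J * l) \<le> \<zeta> * ln y"
    using kJ z by (intro mult_left_mono_neg) auto
  hence up: "w \<le> y powr \<zeta>" by (simp add: w_def yz)
  have "\<zeta> * (ln y - l) \<le> \<zeta> * (ln x + of_int J * l)"
    using kJ1 z by (intro mult_left_mono_neg) (auto simp: algebra_simps)
  hence "exp (\<zeta> * ln y - \<zeta> * l) \<le> w" by (simp add: w_def algebra_simps)
  moreover have "A * y powr \<zeta> = exp (\<zeta> * ln y - \<zeta> * l)"
    unfolding Aexp yz mult_exp_exp by (simp add: algebra_simps)
  ultimately have lo: "A * y powr \<zeta> \<le> w" by simp
  show ?thesis using eq up lo unfolding A_def by blast
qed

lemma inner_up: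
  fixes a x y \<zeta> :: real
  assumes a: "0 < a" "a < 1" and x: "0 < x" and y: "0 < y" and z: "0 < \<zeta>"
  shows "\<exists>v. a powr \<zeta> * y powr \<zeta> \<le> v \<and> v \<le> y powr \<zeta> \<and>
     (\<integral>\<^sup>+j. ennreal ((x * a powi j) powr \<zeta>) * indicator {x * a powi j..} y \<partial>count_space UNIV)
       = ennreal (v / (1 - a powr \<zeta>))"
proof -
  define l where "l = ln a"
  have l: "l < 0" using a by (simp add: l_def)
  define J where "J = \<lceil>(ln y - ln x) / l\<rceil>"
  have key: "x * a powi j \<le> y \<longleftrightarrow> J \<le> j" for j
  proof -
    have "x * a powi j \<le> y \<longleftrightarrow> ln x + of_int j * l \<le> ln y"
      using x y a by (simp add: exp_form l_def exp_le_iff_ln)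
    also have "\<dots> \<longleftrightarrow> (ln y - ln x) / l \<le> of_int j"
      using l by (simp add: neg_divide_le_eq algebra_simps)
    also have "\<dots> \<longleftrightarrow> J \<le> j" by (simp add: J_def ceiling_le_iff)
    finally show ?thesis .
  qed
  define A where "A = a powr \<zeta>"
  have Aexp: "A = exp (\<zeta> * l)" using a by (simp add: A_def powr_def l_def)
  have A0: "0 < A" by (simp add: Aexp)
  have "\<zeta> * l < 0" using z l by (simp add: mult_pos_neg)
  hence A1: "A < 1" unfolding Aexp by simp
  define w where "w = exp (\<zeta> * (ln x + of_int J * l))"
  have trm: "(x * a powi j) powr \<zeta> = w * A ^ nat (j - J)" if "J \<le> j" for j
  proof -
    have rn: "real (nat (j - J)) = of_int j - of_int J" using that by simp
    have Ap: "A ^ nat (j - J) = exp ((of_int j - of_int J) * (\<zeta> * l))"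
      unfolding Aexp using exp_of_nat_mult[of "nat (j - J)" "\<zeta> * l"] rn by simp
    have "w * A ^ nat (j - J) = exp (\<zeta> * (ln x + of_int J * l) + (of_int j - of_int J) * (\<zeta> * l))"
      unfolding w_def Ap exp_add by simp
    also have "\<zeta> * (ln x + of_int J * l) + (of_int j - of_int J) * (\<zeta> * l) = \<zeta> * (ln x + of_int j * l)"
      by (simp add: algebra_simps)
    finally show ?thesis using x a by (simp add: exp_form_powr l_def)
  qed
  have "(\<integral>\<^sup>+j. ennreal ((x * a powi j) powr \<zeta>) * indicator {x * a powi j..} y \<partial>count_space UNIV)
      = (\<integral>\<^sup>+j. ennreal (w * A ^ nat (j - J)) * indicator {J..} j \<partial>count_space UNIV)"
  proof (rule nn_integral_cong)
    fix j :: int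
    show "ennreal ((x * a powi j) powr \<zeta>) * indicator {x * a powi j..} y
        = ennreal (w * A ^ nat (j - J)) * indicator {J..} j"
      using key[of j] trm[of j] y by (auto simp: indicator_def)
  qed
  also have "\<dots> = ennreal (w / (1 - A))"
    using A0 A1 by (intro geo_up_sum) (auto simp: w_def)
  finally have eq: "(\<integral>\<^sup>+j. ennreal ((x * a powi j) powr \<zeta>) * indicator {x * a powi j..} y \<partial>count_space UNIV)
      = ennreal (w / (1 - A))" .
  have yz: "y powr \<zeta> = exp (\<zeta> * ln y)" using y by (simp add: powr_def)
  have kJ: "ln x + of_int J * l \<le> ln y"
    using key[of J] x y a by (simp add: exp_form l_def exp_le_iff_ln)
  have kJ1: "\<not> ln x + of_int (J - 1) * l \<le> ln y"
    using key[of "J - 1"] x y a by (simp add: exp_form l_def exp_le_iff_ln)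
  have "\<zeta> * (ln x + of_int J * l) \<le> \<zeta> * ln y"
    using kJ z by (intro mult_left_mono) auto
  hence up: "w \<le> y powr \<zeta>" by (simp add: w_def yz)
  have "\<zeta> * (ln y + l) \<le> \<zeta> * (ln x + of_int J * l)"
    using kJ1 z by (intro mult_left_mono) (auto simp: algebra_simps)
  hence "exp (\<zeta> * l + \<zeta> * ln y) \<le> w" by (simp add: w_def algebra_simps)
  hence lo: "A * y powr \<zeta> \<le> w" by (simp add: Aexp yz exp_add)
  show ?thesis using eq up lo unfolding A_def by blast
qed

lemma pos_xa: "0 < x \<Longrightarrow> 0 < a \<Longrightarrow> 0 < x * a powi j" for x a :: real
  by (simp add: exp_form)

lemma G_down:
  fixes \<phi> f :: "real \<Rightarrow> real" and a x \<zeta> C :: real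
  assumes a: "0 < a" "a < 1" and x: "0 < x" and z: "\<zeta> < 0"
    and \<phi>nn: "\<And>y. 0 \<le> y \<Longrightarrow> 0 \<le> \<phi> y" and \<phi>m[measurable]: "\<phi> \<in> borel_measurable borel"
    and F: "\<And>u. 0 < u \<Longrightarrow> ennreal (f u) = (\<integral>\<^sup>+y. ennreal (u powr \<zeta> * \<phi> y) * indicator {0..u} y \<partial>lborel)"
    and C: "(\<integral>\<^sup>+y. ennreal (y powr \<zeta> * \<phi> y) * indicator {0..} y \<partial>lborel) = ennreal C"
  shows "ennreal (a powr (-\<zeta>) * C / (1 - a powr (-\<zeta>))) \<le> (\<integral>\<^sup>+j. ennreal (f (x * a powi j)) \<partial>count_space UNIV)
       \<and> (\<integral>\<^sup>+j. ennreal (f (x * a powi j)) \<partial>count_space UNIV) \<le> ennreal (C / (1 - a powr (-\<zeta>)))"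
proof -
  define A where "A = a powr (-\<zeta>)"
  have Aexp: "A = exp (- \<zeta> * ln a)" using a by (simp add: A_def powr_def)
  have A0: "0 < A" by (simp add: Aexp)
  have "0 < \<zeta> * ln a" using z a by (simp add: mult_neg_neg)
  hence A1: "A < 1" unfolding Aexp by simp
  have u: "0 < x * a powi j" for j using x a by (simp add: pos_xa)
  define I where "I y = (\<integral>\<^sup>+j. ennreal ((x * a powi j) powr \<zeta>) * indicator {0..x * a powi j} y \<partial>count_space UNIV)" for y
  have eq: "(\<integral>\<^sup>+j. ennreal (f (x * a powi j)) \<partial>count_space UNIV) = (\<integral>\<^sup>+y. ennreal (\<phi> y) * I y \<partial>lborel)"
  proof -
    have "(\<integral>\<^sup>+j. ennreal (f (x * a powi j)) \<partial>count_space UNIV)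
       = (\<integral>\<^sup>+j. \<integral>\<^sup>+y. ennreal ((x * a powi j) powr \<zeta> * \<phi> y) * indicator {0..x * a powi j} y \<partial>lborel \<partial>count_space UNIV)"
      by (rule nn_integral_cong) (simp add: F[OF u])
    also have "\<dots> = (\<integral>\<^sup>+y. \<integral>\<^sup>+j. ennreal ((x * a powi j) powr \<zeta> * \<phi> y) * indicator {0..x * a powi j} y \<partial>count_space UNIV \<partial>lborel)"
      by (rule nn_integral_count_space_nn_integral[symmetric]) auto
    also have "\<dots> = (\<integral>\<^sup>+y. ennreal (\<phi> y) * I y \<partial>lborel)"
    proof (rule nn_integral_cong)
      fix y :: real
      have "(\<integral>\<^sup>+j. ennreal ((x * a powi j) powr \<zeta> * \<phi> y) * indicator {0..x * a powi j} y \<partial>count_space UNIV)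
          = (\<integral>\<^sup>+j. ennreal (\<phi> y) * (ennreal ((x * a powi j) powr \<zeta>) * indicator {0..x * a powi j} y) \<partial>count_space UNIV)"
        by (intro nn_integral_cong) (auto simp: indicator_def ennreal_mult \<phi>nn mult.commute)
      also have "\<dots> = ennreal (\<phi> y) * I y" unfolding I_def by (rule nn_integral_cmult) simp
      finally show "(\<integral>\<^sup>+j. ennreal ((x * a powi j) powr \<zeta> * \<phi> y) * indicator {0..x * a powi j} y \<partial>count_space UNIV)
          = ennreal (\<phi> y) * I y" .
    qed
    finally show ?thesis .
  qed
  have pw: "ennreal (A / (1 - A)) * (ennreal (y powr \<zeta> * \<phi> y) * indicator {0..} y) \<le> ennreal (\<phi> y) * I y
      \<and> ennreal (\<phi> y) * I y \<le> ennreal (1 / (1 - A)) * (ennreal (y powr \<zeta> * \<phi> y) * indicator {0..} y)"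
    if "y \<noteq> 0" for y
  proof (cases "y < 0")
    case True
    have "I y = 0" unfolding I_def using True by (simp add: indicator_def)
    thus ?thesis using True by (simp add: indicator_def)
  next
    case False
    hence y: "0 < y" using that by simp
    obtain v where v1: "A * y powr \<zeta> \<le> v" and v2: "v \<le> y powr \<zeta>" and Iv: "I y = ennreal (v / (1 - A))"
      using inner_down[OF a x y z] unfolding I_def A_def by blast
    have p: "0 \<le> \<phi> y" using \<phi>nn y by simp
    have d: "0 < 1 - A" using A1 by simp
    have v0: "0 \<le> v" using v1 A0 by (smt (verit) mult_pos_pos powr_gt_zero y)
    have r1: "A / (1 - A) * (y powr \<zeta> * \<phi> y) \<le> \<phi> y * (v / (1 - A))"
    proof -
      have "A * y powr \<zeta> * \<phi> y \<le> v * \<phi> y" using v1 p by (rule mult_right_mono)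
      hence "(A * y powr \<zeta> * \<phi> y) / (1 - A) \<le> (v * \<phi> y) / (1 - A)" using d by (intro divide_right_mono) auto
      moreover have "A / (1 - A) * (y powr \<zeta> * \<phi> y) = (A * y powr \<zeta> * \<phi> y) / (1 - A)" by simp
      moreover have "\<phi> y * (v / (1 - A)) = (v * \<phi> y) / (1 - A)" by simp
      ultimately show ?thesis by (simp add: ac_simps)
    qed
    have r2: "\<phi> y * (v / (1 - A)) \<le> 1 / (1 - A) * (y powr \<zeta> * \<phi> y)"
    proof -
      have "v * \<phi> y \<le> y powr \<zeta> * \<phi> y" using v2 p by (rule mult_right_mono)
      hence "(v * \<phi> y) / (1 - A) \<le> (y powr \<zeta> * \<phi> y) / (1 - A)" using d by (intro divide_right_mono) auto
      moreover have "1 / (1 - A) * (y powr \<zeta> * \<phi> y) = (y powr \<zeta> * \<phi> y) / (1 - A)" by simp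
      moreover have "\<phi> y * (v / (1 - A)) = (v * \<phi> y) / (1 - A)" by simp
      ultimately show ?thesis by (simp add: ac_simps)
    qed
    have e1: "ennreal (A / (1 - A)) * (ennreal (y powr \<zeta> * \<phi> y) * indicator {0..} y) = ennreal (A / (1 - A) * (y powr \<zeta> * \<phi> y))"
    proof -
      have "ennreal (A / (1 - A) * (y powr \<zeta> * \<phi> y)) = ennreal (A / (1 - A)) * ennreal (y powr \<zeta> * \<phi> y)"
        using p A0 d by (intro ennreal_mult) auto
      thus ?thesis using y by (simp add: indicator_def)
    qed
    have e2: "ennreal (\<phi> y) * I y = ennreal (\<phi> y * (v / (1 - A)))"
      unfolding Iv using p v0 d by (intro ennreal_mult[symmetric]) auto
    have e3: "ennreal (1 / (1 - A)) * (ennreal (y powr \<zeta> * \<phi> y) * indicator {0..} y) = ennreal (1 / (1 - A) * (y powr \<zeta> * \<phi> y))"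
    proof -
      have "ennreal (1 / (1 - A) * (y powr \<zeta> * \<phi> y)) = ennreal (1 / (1 - A)) * ennreal (y powr \<zeta> * \<phi> y)"
        using p d by (intro ennreal_mult) auto
      thus ?thesis using y by (simp add: indicator_def)
    qed
    show ?thesis unfolding e1 e2 e3 using r1 r2 by (auto intro: ennreal_leI)
  qed
  have lo: "ennreal (A * C / (1 - A)) \<le> (\<integral>\<^sup>+y. ennreal (\<phi> y) * I y \<partial>lborel)"
  proof -
    have "ennreal (A * C / (1 - A)) = ennreal (A / (1 - A)) * ennreal C"
      using A0 A1 C by (simp add: ennreal_mult'[symmetric])
    also have "\<dots> = (\<integral>\<^sup>+y. ennreal (A / (1 - A)) * (ennreal (y powr \<zeta> * \<phi> y) * indicator {0..} y) \<partial>lborel)"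
      by (subst nn_integral_cmult) (auto simp: C)
    also have "\<dots> \<le> (\<integral>\<^sup>+y. ennreal (\<phi> y) * I y \<partial>lborel)"
      by (rule nn_integral_mono_AE) (use AE_lborel_singleton[of 0] pw in \<open>auto elim!: eventually_mono\<close>)
    finally show ?thesis .
  qed
  have up: "(\<integral>\<^sup>+y. ennreal (\<phi> y) * I y \<partial>lborel) \<le> ennreal (C / (1 - A))"
  proof -
    have "(\<integral>\<^sup>+y. ennreal (\<phi> y) * I y \<partial>lborel)
        \<le> (\<integral>\<^sup>+y. ennreal (1 / (1 - A)) * (ennreal (y powr \<zeta> * \<phi> y) * indicator {0..} y) \<partial>lborel)"
      by (rule nn_integral_mono_AE) (use AE_lborel_singleton[of 0] pw in \<open>auto elim!: eventually_mono\<close>)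
    also have "\<dots> = ennreal (1 / (1 - A)) * ennreal C"
      by (subst nn_integral_cmult) (auto simp: C)
    also have "\<dots> = ennreal (C / (1 - A))"
      using A1 by (simp add: ennreal_mult'[symmetric])
    finally show ?thesis .
  qed
  show ?thesis using lo up eq unfolding A_def by simp
qed

lemma G_up:
  fixes \<phi> f :: "real \<Rightarrow> real" and a x \<zeta> C :: real
  assumes a: "0 < a" "a < 1" and x: "0 < x" and z: "0 < \<zeta>"
    and \<phi>nn: "\<And>y. 0 \<le> y \<Longrightarrow> 0 \<le> \<phi> y" and \<phi>m[measurable]: "\<phi> \<in> borel_measurable borel"
    and F: "\<And>u. 0 < u \<Longrightarrow> ennreal (f u) = (\<integral>\<^sup>+y. ennreal (u powr \<zeta> * \<phi> y) * indicator {u..} y \<partial>lborel)"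
    and C: "(\<integral>\<^sup>+y. ennreal (y powr \<zeta> * \<phi> y) * indicator {0..} y \<partial>lborel) = ennreal C"
  shows "ennreal (a powr \<zeta> * C / (1 - a powr \<zeta>)) \<le> (\<integral>\<^sup>+j. ennreal (f (x * a powi j)) \<partial>count_space UNIV)
       \<and> (\<integral>\<^sup>+j. ennreal (f (x * a powi j)) \<partial>count_space UNIV) \<le> ennreal (C / (1 - a powr \<zeta>))"
proof -
  define A where "A = a powr \<zeta>"
  have Aexp: "A = exp (\<zeta> * ln a)" using a by (simp add: A_def powr_def)
  have A0: "0 < A" by (simp add: Aexp)
  have "\<zeta> * ln a < 0" using z a by (simp add: mult_pos_neg)
  hence A1: "A < 1" unfolding Aexp by simp
  have u: "0 < x * a powi j" for j using x a by (simp add: pos_xa)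
  define I where "I y = (\<integral>\<^sup>+j. ennreal ((x * a powi j) powr \<zeta>) * indicator {x * a powi j..} y \<partial>count_space UNIV)" for y
  have eq: "(\<integral>\<^sup>+j. ennreal (f (x * a powi j)) \<partial>count_space UNIV) = (\<integral>\<^sup>+y. ennreal (\<phi> y) * I y \<partial>lborel)"
  proof -
    have "(\<integral>\<^sup>+j. ennreal (f (x * a powi j)) \<partial>count_space UNIV)
       = (\<integral>\<^sup>+j. \<integral>\<^sup>+y. ennreal ((x * a powi j) powr \<zeta> * \<phi> y) * indicator {x * a powi j..} y \<partial>lborel \<partial>count_space UNIV)"
      by (rule nn_integral_cong) (simp add: F[OF u])
    also have "\<dots> = (\<integral>\<^sup>+y. \<integral>\<^sup>+j. ennreal ((x * a powi j) powr \<zeta> * \<phi> y) * indicator {x * a powi j..} y \<partial>count_space UNIV \<partial>lborel)"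
      by (rule nn_integral_count_space_nn_integral[symmetric]) auto
    also have "\<dots> = (\<integral>\<^sup>+y. ennreal (\<phi> y) * I y \<partial>lborel)"
    proof (rule nn_integral_cong)
      fix y :: real
      have "(\<integral>\<^sup>+j. ennreal ((x * a powi j) powr \<zeta> * \<phi> y) * indicator {x * a powi j..} y \<partial>count_space UNIV)
          = (\<integral>\<^sup>+j. ennreal (\<phi> y) * (ennreal ((x * a powi j) powr \<zeta>) * indicator {x * a powi j..} y) \<partial>count_space UNIV)"
      proof (intro nn_integral_cong)
        fix j :: int
        show "ennreal ((x * a powi j) powr \<zeta> * \<phi> y) * indicator {x * a powi j..} y
            = ennreal (\<phi> y) * (ennreal ((x * a powi j) powr \<zeta>) * indicator {x * a powi j..} y)"
        proof (cases "x * a powi j \<le> y")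
          case True
          hence "0 \<le> y" using u[of j] by linarith
          thus ?thesis using True by (simp add: indicator_def ennreal_mult \<phi>nn mult.commute)
        qed (simp add: indicator_def)
      qed
      also have "\<dots> = ennreal (\<phi> y) * I y" unfolding I_def by (rule nn_integral_cmult) simp
      finally show "(\<integral>\<^sup>+j. ennreal ((x * a powi j) powr \<zeta> * \<phi> y) * indicator {x * a powi j..} y \<partial>count_space UNIV)
          = ennreal (\<phi> y) * I y" .
    qed
    finally show ?thesis .
  qed
  have pw: "ennreal (A / (1 - A)) * (ennreal (y powr \<zeta> * \<phi> y) * indicator {0..} y) \<le> ennreal (\<phi> y) * I y
      \<and> ennreal (\<phi> y) * I y \<le> ennreal (1 / (1 - A)) * (ennreal (y powr \<zeta> * \<phi> y) * indicator {0..} y)"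
    if "y \<noteq> 0" for y
  proof (cases "y < 0")
    case True
    have "\<not> x * a powi j \<le> y" for j using u[of j] True by linarith
    hence "I y = 0" unfolding I_def by (simp add: indicator_def)
    thus ?thesis using True by (simp add: indicator_def)
  next
    case False
    hence y: "0 < y" using that by simp
    obtain v where v1: "A * y powr \<zeta> \<le> v" and v2: "v \<le> y powr \<zeta>" and Iv: "I y = ennreal (v / (1 - A))"
      using inner_up[OF a x y z] unfolding I_def A_def by blast
    have p: "0 \<le> \<phi> y" using \<phi>nn y by simp
    have d: "0 < 1 - A" using A1 by simp
    have v0: "0 \<le> v" using v1 A0 by (smt (verit) mult_pos_pos powr_gt_zero y)
    have r1: "A / (1 - A) * (y powr \<zeta> * \<phi> y) \<le> \<phi> y * (v / (1 - A))"
    proof -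
      have "A * y powr \<zeta> * \<phi> y \<le> v * \<phi> y" using v1 p by (rule mult_right_mono)
      hence "(A * y powr \<zeta> * \<phi> y) / (1 - A) \<le> (v * \<phi> y) / (1 - A)" using d by (intro divide_right_mono) auto
      moreover have "A / (1 - A) * (y powr \<zeta> * \<phi> y) = (A * y powr \<zeta> * \<phi> y) / (1 - A)" by simp
      moreover have "\<phi> y * (v / (1 - A)) = (v * \<phi> y) / (1 - A)" by simp
      ultimately show ?thesis by (simp add: ac_simps)
    qed
    have r2: "\<phi> y * (v / (1 - A)) \<le> 1 / (1 - A) * (y powr \<zeta> * \<phi> y)"
    proof -
      have "v * \<phi> y \<le> y powr \<zeta> * \<phi> y" using v2 p by (rule mult_right_mono)
      hence "(v * \<phi> y) / (1 - A) \<le> (y powr \<zeta> * \<phi> y) / (1 - A)" using d by (intro divide_right_mono) auto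
      moreover have "1 / (1 - A) * (y powr \<zeta> * \<phi> y) = (y powr \<zeta> * \<phi> y) / (1 - A)" by simp
      moreover have "\<phi> y * (v / (1 - A)) = (v * \<phi> y) / (1 - A)" by simp
      ultimately show ?thesis by (simp add: ac_simps)
    qed
    have e1: "ennreal (A / (1 - A)) * (ennreal (y powr \<zeta> * \<phi> y) * indicator {0..} y) = ennreal (A / (1 - A) * (y powr \<zeta> * \<phi> y))"
    proof -
      have "ennreal (A / (1 - A) * (y powr \<zeta> * \<phi> y)) = ennreal (A / (1 - A)) * ennreal (y powr \<zeta> * \<phi> y)"
        using p A0 d by (intro ennreal_mult) auto
      thus ?thesis using y by (simp add: indicator_def)
    qed
    have e2: "ennreal (\<phi> y) * I y = ennreal (\<phi> y * (v / (1 - A)))"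
      unfolding Iv using p v0 d by (intro ennreal_mult[symmetric]) auto
    have e3: "ennreal (1 / (1 - A)) * (ennreal (y powr \<zeta> * \<phi> y) * indicator {0..} y) = ennreal (1 / (1 - A) * (y powr \<zeta> * \<phi> y))"
    proof -
      have "ennreal (1 / (1 - A) * (y powr \<zeta> * \<phi> y)) = ennreal (1 / (1 - A)) * ennreal (y powr \<zeta> * \<phi> y)"
        using p d by (intro ennreal_mult) auto
      thus ?thesis using y by (simp add: indicator_def)
    qed
    show ?thesis unfolding e1 e2 e3 using r1 r2 by (auto intro: ennreal_leI)
  qed
  have lo: "ennreal (A * C / (1 - A)) \<le> (\<integral>\<^sup>+y. ennreal (\<phi> y) * I y \<partial>lborel)"
  proof -
    have "ennreal (A * C / (1 - A)) = ennreal (A / (1 - A)) * ennreal C"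
      using A0 A1 C by (simp add: ennreal_mult'[symmetric])
    also have "\<dots> = (\<integral>\<^sup>+y. ennreal (A / (1 - A)) * (ennreal (y powr \<zeta> * \<phi> y) * indicator {0..} y) \<partial>lborel)"
      by (subst nn_integral_cmult) (auto simp: C)
    also have "\<dots> \<le> (\<integral>\<^sup>+y. ennreal (\<phi> y) * I y \<partial>lborel)"
      by (rule nn_integral_mono_AE) (use AE_lborel_singleton[of 0] pw in \<open>auto elim!: eventually_mono\<close>)
    finally show ?thesis .
  qed
  have up: "(\<integral>\<^sup>+y. ennreal (\<phi> y) * I y \<partial>lborel) \<le> ennreal (C / (1 - A))"
  proof -
    have "(\<integral>\<^sup>+y. ennreal (\<phi> y) * I y \<partial>lborel)
        \<le> (\<integral>\<^sup>+y. ennreal (1 / (1 - A)) * (ennreal (y powr \<zeta> * \<phi> y) * indicator {0..} y) \<partial>lborel)"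
      by (rule nn_integral_mono_AE) (use AE_lborel_singleton[of 0] pw in \<open>auto elim!: eventually_mono\<close>)
    also have "\<dots> = ennreal (1 / (1 - A)) * ennreal C"
      by (subst nn_integral_cmult) (auto simp: C)
    also have "\<dots> = ennreal (C / (1 - A))"
      using A1 by (simp add: ennreal_mult'[symmetric])
    finally show ?thesis .
  qed
  show ?thesis using lo up eq unfolding A_def by simp
qed

lemma powr_int01: "\<zeta> < 0 \<Longrightarrow> (\<integral>\<^sup>+s. ennreal (s powr (-\<zeta>)) * indicator {0..1} s \<partial>lborel) = ennreal (1 / (1 - \<zeta>))"
  for \<zeta> :: real
proof -
  assume z: "\<zeta> < 0"
  have "((\<lambda>s. s powr (-\<zeta>)) has_integral (1 powr (-\<zeta> + 1) / (-\<zeta> + 1))) {0..1}"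
    using z by (intro has_integral_powr_from_0) auto
  hence h: "((\<lambda>s. s powr (-\<zeta>)) has_integral (1 / (1 - \<zeta>))) {0..1}" by simp
  show ?thesis by (rule nn_integral_has_integral_lebesgue'[OF _ h]) auto
qed

lemma G_t:
  fixes f g :: "real \<Rightarrow> real" and a x \<zeta> L U :: real
  assumes a: "0 < a" "a < 1" and x: "0 < x" and z: "\<zeta> < 0"
    and fm[measurable]: "f \<in> borel_measurable borel" and fnn: "\<And>u. 0 \<le> u \<Longrightarrow> 0 \<le> f u"
    and H: "\<And>x. 0 < x \<Longrightarrow> ennreal L \<le> (\<integral>\<^sup>+j. ennreal (f (x * a powi j)) \<partial>count_space UNIV)
              \<and> (\<integral>\<^sup>+j. ennreal (f (x * a powi j)) \<partial>count_space UNIV) \<le> ennreal U"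
    and G: "\<And>u. 0 < u \<Longrightarrow> ennreal (g u) = (\<integral>\<^sup>+s. ennreal (s powr (-\<zeta>) * f (u * s)) * indicator {0..1} s \<partial>lborel)"
    and L: "0 \<le> L" and U: "0 \<le> U"
  shows "ennreal (L / (1 - \<zeta>)) \<le> (\<integral>\<^sup>+j. ennreal (g (x * a powi j)) \<partial>count_space UNIV)
       \<and> (\<integral>\<^sup>+j. ennreal (g (x * a powi j)) \<partial>count_space UNIV) \<le> ennreal (U / (1 - \<zeta>))"
proof -
  have u: "0 < x * a powi j" for j using x a by (simp add: pos_xa)
  define K where "K s = (\<integral>\<^sup>+j. ennreal (f ((x * s) * a powi j)) \<partial>count_space UNIV)" for s
  define P where "P s = ennreal (s powr (-\<zeta>)) * indicator {0..1::real} s" for s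
  have eq: "(\<integral>\<^sup>+j. ennreal (g (x * a powi j)) \<partial>count_space UNIV) = (\<integral>\<^sup>+s. P s * K s \<partial>lborel)"
  proof -
    have "(\<integral>\<^sup>+j. ennreal (g (x * a powi j)) \<partial>count_space UNIV)
       = (\<integral>\<^sup>+j. \<integral>\<^sup>+s. ennreal (s powr (-\<zeta>) * f ((x * a powi j) * s)) * indicator {0..1} s \<partial>lborel \<partial>count_space UNIV)"
      by (rule nn_integral_cong) (simp add: G[OF u])
    also have "\<dots> = (\<integral>\<^sup>+s. \<integral>\<^sup>+j. ennreal (s powr (-\<zeta>) * f ((x * a powi j) * s)) * indicator {0..1} s \<partial>count_space UNIV \<partial>lborel)"
      by (rule nn_integral_count_space_nn_integral[symmetric]) auto
    also have "\<dots> = (\<integral>\<^sup>+s. P s * K s \<partial>lborel)"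
    proof (rule nn_integral_cong)
      fix s :: real
      have "(\<integral>\<^sup>+j. ennreal (s powr (-\<zeta>) * f ((x * a powi j) * s)) * indicator {0..1} s \<partial>count_space UNIV)
          = (\<integral>\<^sup>+j. P s * ennreal (f ((x * s) * a powi j)) \<partial>count_space UNIV)"
      proof (intro nn_integral_cong)
        fix j :: int
        show "ennreal (s powr (-\<zeta>) * f ((x * a powi j) * s)) * indicator {0..1} s
            = P s * ennreal (f ((x * s) * a powi j))"
        proof (cases "s \<in> {0..1}")
          case True
          hence "0 \<le> (x * a powi j) * s" using u[of j] by simp
          have e: "(x * a powi j) * s = (x * s) * a powi j" by (simp add: ac_simps)
          have "0 \<le> (x * s) * a powi j" using \<open>0 \<le> (x * a powi j) * s\<close> unfolding e .
          hence "0 \<le> f ((x * s) * a powi j)" by (rule fnn)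
          hence "ennreal (s powr (-\<zeta>) * f ((x * s) * a powi j)) = ennreal (s powr (-\<zeta>)) * ennreal (f ((x * s) * a powi j))"
            by (intro ennreal_mult) auto
          thus ?thesis using True unfolding e by (simp add: P_def)
        qed (simp add: P_def)
      qed
      also have "\<dots> = P s * K s" unfolding K_def by (rule nn_integral_cmult) simp
      finally show "(\<integral>\<^sup>+j. ennreal (s powr (-\<zeta>) * f ((x * a powi j) * s)) * indicator {0..1} s \<partial>count_space UNIV)
          = P s * K s" .
    qed
    finally show ?thesis .
  qed
  have pw: "P s * ennreal L \<le> P s * K s \<and> P s * K s \<le> P s * ennreal U" if "s \<noteq> 0" for s
  proof (cases "0 < s")
    case True
    have "0 < x * s" using x True by simp
    from H[OF this] have "ennreal L \<le> K s" "K s \<le> ennreal U" unfolding K_def by auto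
    thus ?thesis by (auto intro: mult_left_mono)
  next
    case False
    hence "s < 0" using that by simp
    thus ?thesis by (simp add: P_def indicator_def)
  qed
  have PI: "(\<integral>\<^sup>+s. P s \<partial>lborel) = ennreal (1 / (1 - \<zeta>))"
    unfolding P_def by (rule powr_int01[OF z])
  have Pm: "P \<in> borel_measurable lborel" unfolding P_def by measurable
  have lo: "ennreal (L / (1 - \<zeta>)) \<le> (\<integral>\<^sup>+s. P s * K s \<partial>lborel)"
  proof -
    have "ennreal (L / (1 - \<zeta>)) = ennreal (1 / (1 - \<zeta>)) * ennreal L"
      using z L by (simp add: ennreal_mult'[symmetric])
    also have "\<dots> = (\<integral>\<^sup>+s. P s * ennreal L \<partial>lborel)"
      using Pm by (simp add: nn_integral_multc PI)
    also have "\<dots> \<le> (\<integral>\<^sup>+s. P s * K s \<partial>lborel)"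
      by (rule nn_integral_mono_AE) (use AE_lborel_singleton[of 0] pw in \<open>auto elim!: eventually_mono\<close>)
    finally show ?thesis .
  qed
  have up: "(\<integral>\<^sup>+s. P s * K s \<partial>lborel) \<le> ennreal (U / (1 - \<zeta>))"
  proof -
    have "(\<integral>\<^sup>+s. P s * K s \<partial>lborel) \<le> (\<integral>\<^sup>+s. P s * ennreal U \<partial>lborel)"
      by (rule nn_integral_mono_AE) (use AE_lborel_singleton[of 0] pw in \<open>auto elim!: eventually_mono\<close>)
    also have "\<dots> = ennreal (1 / (1 - \<zeta>)) * ennreal U"
      using Pm by (simp add: nn_integral_multc PI)
    also have "\<dots> = ennreal (U / (1 - \<zeta>))"
      using z U by (simp add: ennreal_mult'[symmetric])
    finally show ?thesis .
  qed
  show ?thesis using lo up eq by simp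
qed


lemma gamma_nn:
  fixes \<zeta> :: real assumes z: "-1 < \<zeta>"
  shows "(\<integral>\<^sup>+y. ennreal (y powr \<zeta> * exp (- y)) * indicator {0..} y \<partial>lborel) = ennreal (Gamma (\<zeta> + 1))"
proof -
  have h: "((\<lambda>y. y powr \<zeta> * exp (- y)) has_integral Gamma (\<zeta> + 1)) {0..}"
    using Gamma_integral_real[of "\<zeta> + 1"] z by (simp add: exp_minus divide_inverse)
  show ?thesis by (rule nn_integral_has_integral_lebesgue'[OF _ h]) auto
qed

lemma ftc_exp:
  fixes u :: real assumes u: "0 \<le> u"
  shows "((\<lambda>y. exp (- y)) has_integral (1 - exp (- u))) {0..u}"
proof -
  have "((\<lambda>y. exp (- y)) has_integral ((- exp (- u)) - (- exp (- 0)))) {0..u}"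
    using u by (intro fundamental_theorem_of_calculus)
      (auto intro!: derivative_eq_intros simp flip: has_real_derivative_iff_has_vector_derivative)
  thus ?thesis by simp
qed

lemma ftc_exp2:
  fixes u :: real assumes u: "0 \<le> u"
  shows "((\<lambda>y. 2 * exp (- y) - 2 * exp (- (2 * y))) has_integral (1 - exp (- u))\<^sup>2) {0..u}"
proof -
  have "((\<lambda>y. 2 * exp (- y) - 2 * exp (- (2 * y))) has_integral
      ((exp (- (2 * u)) - 2 * exp (- u)) - (exp (- (2 * 0)) - 2 * exp (- 0)))) {0..u}"
    using u by (intro fundamental_theorem_of_calculus)
      (auto intro!: derivative_eq_intros simp flip: has_real_derivative_iff_has_vector_derivative)
  moreover have "(exp (- (2 * u)) - 2 * exp (- u)) - (exp (- (2 * 0)) - 2 * exp (- 0)) = (1 - exp (- u))\<^sup>2"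
  proof -
    have "exp (- (2 * u)) = exp (- u) * exp (- u)" by (simp flip: exp_add)
    thus ?thesis by (simp add: power2_eq_square algebra_simps)
  qed
  ultimately show ?thesis by simp
qed

lemma ftc_t2:
  fixes u \<zeta> :: real assumes u: "0 < u"
  shows "((\<lambda>s. u powr \<zeta> * (1 - exp (- (u * s)))) has_integral (u powr (\<zeta> - 1) * (exp (- u) - 1 + u))) {0..1}"
proof -
  have "((\<lambda>s. u powr \<zeta> * (1 - exp (- (u * s)))) has_integral
      (u powr \<zeta> * (1 + exp (- (u * 1)) / u) - u powr \<zeta> * (0 + exp (- (u * 0)) / u))) {0..1}"
    using u by (intro fundamental_theorem_of_calculus)
      (auto intro!: derivative_eq_intros simp flip: has_real_derivative_iff_has_vector_derivative
        simp: field_simps)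
  moreover have "u powr \<zeta> * (1 + exp (- (u * 1)) / u) - u powr \<zeta> * (0 + exp (- (u * 0)) / u)
      = u powr (\<zeta> - 1) * (exp (- u) - 1 + u)"
    using u by (simp add: powr_diff field_simps)
  ultimately show ?thesis by simp
qed

lemma ftc_t3:
  fixes u \<zeta> :: real assumes u: "0 < u"
  shows "((\<lambda>s. u powr \<zeta> * (1 - exp (- (u * s)))\<^sup>2) has_integral
     (u powr (\<zeta> - 1) * (2 * exp (- u) - 1/2 * exp (- 2 * u) + u - 3/2))) {0..1}"
proof -
  define F where "F s = u powr \<zeta> * (s + 2 * exp (- (u * s)) / u - exp (- (2 * (u * s))) / (2 * u))" for s
  have d: "(F has_real_derivative (u powr \<zeta> * (1 - exp (- (u * s)))\<^sup>2)) (at s within {0..1})" for s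
  proof -
    have e: "exp (- (2 * (u * s))) = exp (- (u * s)) * exp (- (u * s))" by (simp flip: exp_add)
    have e2: "exp (- (s * (u * 2))) = exp (- (s * u)) * exp (- (s * u))" by (simp flip: exp_add)
    show ?thesis unfolding F_def
      using u by (auto intro!: derivative_eq_intros simp: e e2 power2_eq_square field_simps)
  qed
  have "((\<lambda>s. u powr \<zeta> * (1 - exp (- (u * s)))\<^sup>2) has_integral (F 1 - F 0)) {0..1}"
    using d by (intro fundamental_theorem_of_calculus)
      (auto simp flip: has_real_derivative_iff_has_vector_derivative)
  moreover have "F 1 - F 0 = u powr (\<zeta> - 1) * (2 * exp (- u) - 1/2 * exp (- 2 * u) + u - 3/2)"
    using u by (simp add: F_def powr_diff field_simps)
  ultimately show ?thesis by simp
qed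

lemma gamma2_nn:
  fixes \<zeta> :: real assumes z: "-1 < \<zeta>"
  shows "(\<integral>\<^sup>+y. ennreal (y powr \<zeta> * exp (- (2 * y))) * indicator {0..} y \<partial>lborel) = ennreal (2 powr (-\<zeta>) * Gamma (\<zeta> + 1) / 2)"
proof -
  define Q where "Q = (\<integral>\<^sup>+y. ennreal (y powr \<zeta> * exp (- (2 * y))) * indicator {0..} y \<partial>lborel)"
  define H where "H y = ennreal ((y / 2) powr \<zeta> * exp (- y)) * indicator {0..} y" for y :: real
  have Hm: "H \<in> borel_measurable borel" unfolding H_def by measurable
  have "(\<integral>\<^sup>+y. H y \<partial>lborel) = ennreal \<bar>2\<bar> * (\<integral>\<^sup>+y. H (0 + 2 * y) \<partial>lborel)"
    by (rule nn_integral_real_affine[OF Hm]) simp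
  also have "(\<integral>\<^sup>+y. H (0 + 2 * y) \<partial>lborel) = Q"
    unfolding Q_def by (rule nn_integral_cong) (auto simp: H_def indicator_def)
  finally have 1: "(\<integral>\<^sup>+y. H y \<partial>lborel) = ennreal 2 * Q" by simp
  have "(\<integral>\<^sup>+y. H y \<partial>lborel) = (\<integral>\<^sup>+y. ennreal (2 powr (-\<zeta>)) * (ennreal (y powr \<zeta> * exp (- y)) * indicator {0..} y) \<partial>lborel)"
  proof (rule nn_integral_cong)
    fix y :: real
    show "H y = ennreal (2 powr (-\<zeta>)) * (ennreal (y powr \<zeta> * exp (- y)) * indicator {0..} y)"
    proof (cases "0 \<le> y")
      case True
      have "(y / 2) powr \<zeta> * exp (- y) = 2 powr (-\<zeta>) * (y powr \<zeta> * exp (- y))"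
        using True by (simp add: powr_divide powr_minus_divide)
      thus ?thesis using True by (simp add: H_def ennreal_mult mult.assoc)
    qed (simp add: H_def)
  qed
  also have "\<dots> = ennreal (2 powr (-\<zeta>)) * ennreal (Gamma (\<zeta> + 1))"
    by (subst nn_integral_cmult) (auto simp: gamma_nn[OF z])
  finally have 2: "ennreal 2 * Q = ennreal (2 powr (-\<zeta>) * Gamma (\<zeta> + 1))"
    using 1 z by (simp add: ennreal_mult)
  have e: "ennreal (1/2) * ennreal 2 = ennreal (1/2 * 2)"
    by (rule ennreal_mult[symmetric]) simp_all
  have e1: "(1/2::real) * 2 = 1" by simp
  have "Q = ennreal (1/2) * (ennreal 2 * Q)"
    by (simp only: mult.assoc[symmetric] e e1 ennreal_1 mult_1)
  also have "\<dots> = ennreal (1/2) * ennreal (2 powr (-\<zeta>) * Gamma (\<zeta> + 1))"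
    unfolding 2 ..
  also have "\<dots> = ennreal (2 powr (-\<zeta>) * Gamma (\<zeta> + 1) / 2)"
    using ennreal_mult[of "1/2" "2 powr (-\<zeta>) * Gamma (\<zeta> + 1)"] z by simp
  finally show ?thesis unfolding Q_def .
qed

lemma gamma3_nn:
  fixes \<zeta> :: real assumes z: "-1 < \<zeta>"
  shows "(\<integral>\<^sup>+y. ennreal (y powr \<zeta> * (2 * exp (- y) - 2 * exp (- (2 * y)))) * indicator {0..} y \<partial>lborel)
       = ennreal ((2 - 2 powr (-\<zeta>)) * Gamma (\<zeta> + 1))"
proof -
  define P where "P y = ennreal (y powr \<zeta> * (2 * exp (- y) - 2 * exp (- (2 * y)))) * indicator {0..} y" for y :: real
  define R where "R y = ennreal 2 * (ennreal (y powr \<zeta> * exp (- (2 * y))) * indicator {0..} y)" for y :: real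
  have Pm: "P \<in> borel_measurable lborel" unfolding P_def by measurable
  have Rm: "R \<in> borel_measurable lborel" unfolding R_def by measurable
  have G: "Gamma (\<zeta> + 1) > 0" using z by simp
  have "(\<integral>\<^sup>+y. P y \<partial>lborel) + (\<integral>\<^sup>+y. R y \<partial>lborel) = (\<integral>\<^sup>+y. P y + R y \<partial>lborel)"
    by (rule nn_integral_add[symmetric, OF Pm Rm])
  also have "\<dots> = (\<integral>\<^sup>+y. ennreal 2 * (ennreal (y powr \<zeta> * exp (- y)) * indicator {0..} y) \<partial>lborel)"
  proof (rule nn_integral_cong)
    fix y :: real
    show "P y + R y = ennreal 2 * (ennreal (y powr \<zeta> * exp (- y)) * indicator {0..} y)"
    proof (cases "0 \<le> y")
      case True
      have le: "exp (- (2 * y)) \<le> exp (- y)" using True by simp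
      have p1: "0 \<le> y powr \<zeta> * (2 * exp (- y) - 2 * exp (- (2 * y)))" using le by simp
      have p2: "0 \<le> 2 * (y powr \<zeta> * exp (- (2 * y)))" by simp
      have "ennreal (y powr \<zeta> * (2 * exp (- y) - 2 * exp (- (2 * y)))) + ennreal (2 * (y powr \<zeta> * exp (- (2 * y))))
          = ennreal (y powr \<zeta> * (2 * exp (- y) - 2 * exp (- (2 * y))) + 2 * (y powr \<zeta> * exp (- (2 * y))))"
        using p1 p2 by (rule ennreal_plus[symmetric])
      also have "\<dots> = ennreal (2 * (y powr \<zeta> * exp (- y)))" by (simp add: algebra_simps)
      finally show ?thesis using True by (simp add: P_def R_def ennreal_mult)
    qed (simp add: P_def R_def)
  qed
  also have "\<dots> = ennreal 2 * ennreal (Gamma (\<zeta> + 1))"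
    by (subst nn_integral_cmult) (auto simp: gamma_nn[OF z])
  finally have sum: "(\<integral>\<^sup>+y. P y \<partial>lborel) + (\<integral>\<^sup>+y. R y \<partial>lborel) = ennreal (2 * Gamma (\<zeta> + 1))"
    using ennreal_mult[of 2 "Gamma (\<zeta> + 1)"] G by simp
  have "(\<integral>\<^sup>+y. R y \<partial>lborel) = ennreal 2 * ennreal (2 powr (-\<zeta>) * Gamma (\<zeta> + 1) / 2)"
    unfolding R_def by (subst nn_integral_cmult) (auto simp: gamma2_nn[OF z])
  also have "\<dots> = ennreal (2 powr (-\<zeta>) * Gamma (\<zeta> + 1))"
    using ennreal_mult[of 2 "2 powr (-\<zeta>) * Gamma (\<zeta> + 1) / 2"] G by simp
  finally have Rv: "(\<integral>\<^sup>+y. R y \<partial>lborel) = ennreal (2 powr (-\<zeta>) * Gamma (\<zeta> + 1))" .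
  have "(\<integral>\<^sup>+y. P y \<partial>lborel) \<le> ennreal (2 * Gamma (\<zeta> + 1))"
  proof -
    have "(\<integral>\<^sup>+y. P y \<partial>lborel) \<le> (\<integral>\<^sup>+y. P y \<partial>lborel) + (\<integral>\<^sup>+y. R y \<partial>lborel)"
      by (rule add_increasing2) auto
    thus ?thesis using sum by simp
  qed
  hence "(\<integral>\<^sup>+y. P y \<partial>lborel) < top" using ennreal_less_top le_less_trans by blast
  then obtain r where r: "(\<integral>\<^sup>+y. P y \<partial>lborel) = ennreal r" "0 \<le> r"
    by (cases "(\<integral>\<^sup>+y. P y \<partial>lborel)" rule: ennreal_cases) auto
  have "ennreal (r + 2 powr (-\<zeta>) * Gamma (\<zeta> + 1)) = ennreal r + ennreal (2 powr (-\<zeta>) * Gamma (\<zeta> + 1))"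
    by (rule ennreal_plus) (use r G in auto)
  hence "ennreal (r + 2 powr (-\<zeta>) * Gamma (\<zeta> + 1)) = ennreal (2 * Gamma (\<zeta> + 1))"
    using sum r Rv by simp
  hence "r + 2 powr (-\<zeta>) * Gamma (\<zeta> + 1) = 2 * Gamma (\<zeta> + 1)"
    using r G by (subst (asm) ennreal_inj) auto
  hence "r = (2 - 2 powr (-\<zeta>)) * Gamma (\<zeta> + 1)" by (simp add: algebra_simps)
  thus ?thesis using r unfolding P_def by simp
qed

lemma F1_rep:
  fixes u \<zeta> :: real assumes u: "0 < u"
  shows "ennreal (u powr \<zeta> * exp (- u)) = (\<integral>\<^sup>+y. ennreal (u powr \<zeta> * exp (- y)) * indicator {u..} y \<partial>lborel)"
proof -
  have "((\<lambda>y. exp (- 1 * y)) has_integral exp (- 1 * u) / 1) {u..}"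
    by (rule has_integral_exp_minus_to_infinity) simp
  hence "((\<lambda>y. exp (- y)) has_integral exp (- u)) {u..}" by simp
  hence h: "((\<lambda>y. u powr \<zeta> * exp (- y)) has_integral u powr \<zeta> * exp (- u)) {u..}"
    by (rule has_integral_mult_right)
  show ?thesis by (rule nn_integral_has_integral_lebesgue'[OF _ h, symmetric]) auto
qed

lemma F2_rep:
  fixes u \<zeta> :: real assumes u: "0 < u"
  shows "ennreal (u powr \<zeta> * (1 - exp (- u))) = (\<integral>\<^sup>+y. ennreal (u powr \<zeta> * exp (- y)) * indicator {0..u} y \<partial>lborel)"
proof -
  have h: "((\<lambda>y. u powr \<zeta> * exp (- y)) has_integral u powr \<zeta> * (1 - exp (- u))) {0..u}"
    using u by (intro has_integral_mult_right ftc_exp) simp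
  show ?thesis by (rule nn_integral_has_integral_lebesgue'[OF _ h, symmetric]) auto
qed

lemma F3_rep:
  fixes u \<zeta> :: real assumes u: "0 < u"
  shows "ennreal (u powr \<zeta> * (1 - exp (- u))\<^sup>2)
     = (\<integral>\<^sup>+y. ennreal (u powr \<zeta> * (2 * exp (- y) - 2 * exp (- (2 * y)))) * indicator {0..u} y \<partial>lborel)"
proof -
  have h: "((\<lambda>y. u powr \<zeta> * (2 * exp (- y) - 2 * exp (- (2 * y)))) has_integral u powr \<zeta> * (1 - exp (- u))\<^sup>2) {0..u}"
    using u by (intro has_integral_mult_right ftc_exp2) simp
  show ?thesis by (rule nn_integral_has_integral_lebesgue'[OF _ h, symmetric]) auto
qed

lemma spow: "0 < s \<Longrightarrow> 0 < u \<Longrightarrow> s powr (-\<zeta>) * ((u * s) powr \<zeta> * X) = u powr \<zeta> * X" for s u \<zeta> X :: real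
  by (simp add: powr_mult powr_minus field_simps)

lemma Gt2_rep:
  fixes u \<zeta> :: real assumes u: "0 < u"
  shows "ennreal (u powr (\<zeta> - 1) * (exp (- u) - 1 + u))
     = (\<integral>\<^sup>+s. ennreal (s powr (-\<zeta>) * ((u * s) powr \<zeta> * (1 - exp (- (u * s))))) * indicator {0..1} s \<partial>lborel)"
proof -
  have h: "((\<lambda>s. u powr \<zeta> * (1 - exp (- (u * s)))) has_integral (u powr (\<zeta> - 1) * (exp (- u) - 1 + u))) {0..1}"
    using ftc_t2[OF u] .
  have "(\<integral>\<^sup>+s. ennreal (u powr \<zeta> * (1 - exp (- (u * s)))) * indicator {0..1} s \<partial>lborel)
      = ennreal (u powr (\<zeta> - 1) * (exp (- u) - 1 + u))"
  proof (intro nn_integral_has_integral_lebesgue'[OF _ h])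
    fix s :: real assume "s \<in> {0..1}"
    hence "0 \<le> u * s" using u by simp
    hence "exp (- (u * s)) \<le> 1" by simp
    thus "0 \<le> u powr \<zeta> * (1 - exp (- (u * s)))" by simp
  qed
  moreover have "(\<integral>\<^sup>+s. ennreal (u powr \<zeta> * (1 - exp (- (u * s)))) * indicator {0..1} s \<partial>lborel)
      = (\<integral>\<^sup>+s. ennreal (s powr (-\<zeta>) * ((u * s) powr \<zeta> * (1 - exp (- (u * s))))) * indicator {0..1} s \<partial>lborel)"
    by (rule nn_integral_cong_AE, use AE_lborel_singleton[of 0] in \<open>eventually_elim\<close>)
       (auto simp: indicator_def spow u)
  ultimately show ?thesis by simp
qed

lemma Gt3_rep:
  fixes u \<zeta> :: real assumes u: "0 < u"
  shows "ennreal (u powr (\<zeta> - 1) * (2 * exp (- u) - 1/2 * exp (- 2 * u) + u - 3/2))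
     = (\<integral>\<^sup>+s. ennreal (s powr (-\<zeta>) * ((u * s) powr \<zeta> * (1 - exp (- (u * s)))\<^sup>2)) * indicator {0..1} s \<partial>lborel)"
proof -
  have h: "((\<lambda>s. u powr \<zeta> * (1 - exp (- (u * s)))\<^sup>2) has_integral
     (u powr (\<zeta> - 1) * (2 * exp (- u) - 1/2 * exp (- 2 * u) + u - 3/2))) {0..1}"
    using ftc_t3[OF u] .
  have "(\<integral>\<^sup>+s. ennreal (u powr \<zeta> * (1 - exp (- (u * s)))\<^sup>2) * indicator {0..1} s \<partial>lborel)
      = ennreal (u powr (\<zeta> - 1) * (2 * exp (- u) - 1/2 * exp (- 2 * u) + u - 3/2))"
    by (intro nn_integral_has_integral_lebesgue'[OF _ h]) auto
  moreover have "(\<integral>\<^sup>+s. ennreal (u powr \<zeta> * (1 - exp (- (u * s)))\<^sup>2) * indicator {0..1} s \<partial>lborel)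
      = (\<integral>\<^sup>+s. ennreal (s powr (-\<zeta>) * ((u * s) powr \<zeta> * (1 - exp (- (u * s)))\<^sup>2)) * indicator {0..1} s \<partial>lborel)"
    by (rule nn_integral_cong_AE, use AE_lborel_singleton[of 0] in \<open>eventually_elim\<close>)
       (auto simp: indicator_def spow u)
  ultimately show ?thesis by simp
qed

lemma powr_lt1: "0 < a \<Longrightarrow> a < 1 \<Longrightarrow> 0 < p \<Longrightarrow> a powr p < (1::real)"
  by (simp add: powr_def mult_pos_neg)

lemma res_h1:
  fixes a x \<zeta> :: real assumes a: "0 < a" "a < 1" and x: "0 < x" and z: "0 < \<zeta>"
  shows "Gamma (\<zeta> + 1) / (a powr (-\<zeta>) - 1) \<le> (\<Sum>\<^sub>\<infinity>j::int. (x * a powi j) powr \<zeta> * exp (- (x * a powi j)))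
    \<and> (\<Sum>\<^sub>\<infinity>j::int. (x * a powi j) powr \<zeta> * exp (- (x * a powi j))) \<le> a powr (-\<zeta>) * Gamma (\<zeta> + 1) / (a powr (-\<zeta>) - 1)"
proof -
  have G: "Gamma (\<zeta> + 1) > 0" using z by simp
  define B where "B = a powr \<zeta>"
  have B0: "0 < B" using a by (simp add: B_def)
  have B1: "B < 1" using a z by (simp add: B_def powr_lt1)
  have bnd: "ennreal (a powr \<zeta> * Gamma (\<zeta> + 1) / (1 - a powr \<zeta>)) \<le> (\<integral>\<^sup>+j. ennreal ((x * a powi j) powr \<zeta> * exp (- (x * a powi j))) \<partial>count_space UNIV)
       \<and> (\<integral>\<^sup>+j. ennreal ((x * a powi j) powr \<zeta> * exp (- (x * a powi j))) \<partial>count_space UNIV) \<le> ennreal (Gamma (\<zeta> + 1) / (1 - a powr \<zeta>))"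
    by (rule G_up[OF a x z, where \<phi>="\<lambda>y. exp (- y)" and f="\<lambda>u. u powr \<zeta> * exp (- u)" and C="Gamma (\<zeta> + 1)"])
       (use z in \<open>auto simp: F1_rep gamma_nn\<close>)
  have r: "a powr \<zeta> * Gamma (\<zeta> + 1) / (1 - a powr \<zeta>) \<le> (\<Sum>\<^sub>\<infinity>j::int. (x * a powi j) powr \<zeta> * exp (- (x * a powi j)))
    \<and> (\<Sum>\<^sub>\<infinity>j::int. (x * a powi j) powr \<zeta> * exp (- (x * a powi j))) \<le> Gamma (\<zeta> + 1) / (1 - a powr \<zeta>)"
    by (rule infsum_bounds_from_nn) (use bnd G B0 B1 in \<open>auto simp: B_def\<close>)
  have e1: "Gamma (\<zeta> + 1) / (a powr (-\<zeta>) - 1) = a powr \<zeta> * Gamma (\<zeta> + 1) / (1 - a powr \<zeta>)"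
    using B0 B1 unfolding powr_minus_divide B_def[symmetric] by (simp add: field_simps)
  have e2: "a powr (-\<zeta>) * Gamma (\<zeta> + 1) / (a powr (-\<zeta>) - 1) = Gamma (\<zeta> + 1) / (1 - a powr \<zeta>)"
    using B0 B1 unfolding powr_minus_divide B_def[symmetric] by (simp add: field_simps)
  show ?thesis using r unfolding e1 e2 .
qed

lemma H2_bnd:
  fixes a x \<zeta> :: real assumes a: "0 < a" "a < 1" and x: "0 < x" and z: "-1 < \<zeta>" "\<zeta> < 0"
  shows "ennreal (a powr (-\<zeta>) * Gamma (\<zeta> + 1) / (1 - a powr (-\<zeta>))) \<le> (\<integral>\<^sup>+j. ennreal ((x * a powi j) powr \<zeta> * (1 - exp (- (x * a powi j)))) \<partial>count_space UNIV)
       \<and> (\<integral>\<^sup>+j. ennreal ((x * a powi j) powr \<zeta> * (1 - exp (- (x * a powi j)))) \<partial>count_space UNIV) \<le> ennreal (Gamma (\<zeta> + 1) / (1 - a powr (-\<zeta>)))"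
  by (rule G_down[OF a x z(2), where \<phi>="\<lambda>y. exp (- y)" and f="\<lambda>u. u powr \<zeta> * (1 - exp (- u))" and C="Gamma (\<zeta> + 1)"])
     (use z in \<open>auto simp: F2_rep gamma_nn\<close>)

lemma H3_bnd:
  fixes a x \<zeta> :: real assumes a: "0 < a" "a < 1" and x: "0 < x" and z: "-1 < \<zeta>" "\<zeta> < 0"
  shows "ennreal (a powr (-\<zeta>) * ((2 - 2 powr (-\<zeta>)) * Gamma (\<zeta> + 1)) / (1 - a powr (-\<zeta>))) \<le> (\<integral>\<^sup>+j. ennreal ((x * a powi j) powr \<zeta> * (1 - exp (- (x * a powi j)))\<^sup>2) \<partial>count_space UNIV)
       \<and> (\<integral>\<^sup>+j. ennreal ((x * a powi j) powr \<zeta> * (1 - exp (- (x * a powi j)))\<^sup>2) \<partial>count_space UNIV) \<le> ennreal ((2 - 2 powr (-\<zeta>)) * Gamma (\<zeta> + 1) / (1 - a powr (-\<zeta>)))"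
proof (rule G_down[OF a x z(2), where \<phi>="\<lambda>y. 2 * exp (- y) - 2 * exp (- (2 * y))" and f="\<lambda>u. u powr \<zeta> * (1 - exp (- u))\<^sup>2" and C="(2 - 2 powr (-\<zeta>)) * Gamma (\<zeta> + 1)"])
  fix y :: real assume "0 \<le> y"
  hence "exp (- (2 * y)) \<le> exp (- y)" by simp
  thus "0 \<le> 2 * exp (- y) - 2 * exp (- (2 * y))" by simp
qed (use z in \<open>auto simp: F3_rep gamma3_nn\<close>)

lemma nonneg_f2: "0 \<le> u \<Longrightarrow> 0 \<le> u powr \<zeta> * (1 - exp (- u))" for u \<zeta> :: real
  by simp

lemma nonneg_f3: "0 \<le> u \<Longrightarrow> 0 \<le> u powr \<zeta> * (1 - exp (- u))\<^sup>2" for u \<zeta> :: real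
  by simp

lemma A_facts:
  fixes a \<zeta> :: real assumes a: "0 < a" "a < 1" and z: "\<zeta> < 0"
  shows "0 < a powr (-\<zeta>)" "a powr (-\<zeta>) < 1"
  using a z by (simp_all add: powr_lt1)

lemma two_fact: "-1 < \<zeta> \<Longrightarrow> 0 < 2 - 2 powr (-\<zeta>)" for \<zeta> :: real
proof -
  assume z: "-1 < \<zeta>"
  have "2 powr (-\<zeta>) < 2 powr 1" using z by (intro powr_less_mono) auto
  thus ?thesis by simp
qed

lemma res_h2:
  fixes a x \<zeta> :: real assumes a: "0 < a" "a < 1" and x: "0 < x" and z: "-1 < \<zeta>" "\<zeta> < 0"
  shows "a powr (-\<zeta>) * Gamma (\<zeta> + 1) / (1 - a powr (-\<zeta>)) \<le> (\<Sum>\<^sub>\<infinity>j::int. (x * a powi j) powr \<zeta> * (1 - exp (- (x * a powi j))))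
    \<and> (\<Sum>\<^sub>\<infinity>j::int. (x * a powi j) powr \<zeta> * (1 - exp (- (x * a powi j)))) \<le> Gamma (\<zeta> + 1) / (1 - a powr (-\<zeta>))"
proof -
  have G: "Gamma (\<zeta> + 1) > 0" using z by simp
  note A = A_facts[OF a z(2)]
  show ?thesis
    by (rule infsum_bounds_from_nn) (use H2_bnd[OF a x z] G A pos_xa[OF x a(1)] in \<open>auto intro: nonneg_f2 less_imp_le\<close>)
qed

lemma res_h3:
  fixes a x \<zeta> :: real assumes a: "0 < a" "a < 1" and x: "0 < x" and z: "-1 < \<zeta>" "\<zeta> < 0"
  shows "a powr (-\<zeta>) * (2 - 2 powr (-\<zeta>)) * Gamma (\<zeta> + 1) / (1 - a powr (-\<zeta>)) \<le> (\<Sum>\<^sub>\<infinity>j::int. (x * a powi j) powr \<zeta> * (1 - exp (- (x * a powi j)))\<^sup>2)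
    \<and> (\<Sum>\<^sub>\<infinity>j::int. (x * a powi j) powr \<zeta> * (1 - exp (- (x * a powi j)))\<^sup>2) \<le> (2 - 2 powr (-\<zeta>)) * Gamma (\<zeta> + 1) / (1 - a powr (-\<zeta>))"
proof -
  have G: "Gamma (\<zeta> + 1) > 0" using z by simp
  note A = A_facts[OF a z(2)]
  note T = two_fact[OF z(1)]
  have "a powr (-\<zeta>) * ((2 - 2 powr (-\<zeta>)) * Gamma (\<zeta> + 1)) / (1 - a powr (-\<zeta>)) \<le> (\<Sum>\<^sub>\<infinity>j::int. (x * a powi j) powr \<zeta> * (1 - exp (- (x * a powi j)))\<^sup>2)
    \<and> (\<Sum>\<^sub>\<infinity>j::int. (x * a powi j) powr \<zeta> * (1 - exp (- (x * a powi j)))\<^sup>2) \<le> (2 - 2 powr (-\<zeta>)) * Gamma (\<zeta> + 1) / (1 - a powr (-\<zeta>))"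
    by (rule infsum_bounds_from_nn) (use H3_bnd[OF a x z] G A T in \<open>auto\<close>)
  thus ?thesis by (simp add: mult.assoc)
qed

lemma g2_nonneg: "0 < u \<Longrightarrow> 0 \<le> u powr (\<zeta> - 1) * (exp (- u) - 1 + u)" for u \<zeta> :: real
proof -
  assume u: "0 < u"
  have "1 + (- u) \<le> exp (- u)" by (rule exp_ge_add_one_self)
  thus ?thesis by simp
qed

lemma g3_nonneg: "0 < u \<Longrightarrow> 0 \<le> u powr (\<zeta> - 1) * (2 * exp (- u) - 1/2 * exp (- 2 * u) + u - 3/2)" for u \<zeta> :: real
proof -
  assume u: "0 < u"
  show ?thesis
  proof (rule has_integral_nonneg[OF ftc_t3[OF u]])
    fix s :: real assume "s \<in> {0..1}"
    show "0 \<le> u powr \<zeta> * (1 - exp (- (u * s)))\<^sup>2" by simp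
  qed
qed

lemma res_ht2:
  fixes a x \<zeta> :: real assumes a: "0 < a" "a < 1" and x: "0 < x" and z: "-1 < \<zeta>" "\<zeta> < 0"
  shows "a powr (-\<zeta>) * Gamma (\<zeta> + 1) / ((1 - a powr (-\<zeta>)) * (1 - \<zeta>)) \<le> (\<Sum>\<^sub>\<infinity>j::int. (x * a powi j) powr (\<zeta> - 1) * (exp (- (x * a powi j)) - 1 + x * a powi j))
    \<and> (\<Sum>\<^sub>\<infinity>j::int. (x * a powi j) powr (\<zeta> - 1) * (exp (- (x * a powi j)) - 1 + x * a powi j)) \<le> Gamma (\<zeta> + 1) / ((1 - a powr (-\<zeta>)) * (1 - \<zeta>))"
proof -
  have G: "Gamma (\<zeta> + 1) > 0" using z by simp
  note A = A_facts[OF a z(2)]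
  have bnd: "ennreal (a powr (-\<zeta>) * Gamma (\<zeta> + 1) / (1 - a powr (-\<zeta>)) / (1 - \<zeta>)) \<le> (\<integral>\<^sup>+j. ennreal ((x * a powi j) powr (\<zeta> - 1) * (exp (- (x * a powi j)) - 1 + x * a powi j)) \<partial>count_space UNIV)
     \<and> (\<integral>\<^sup>+j. ennreal ((x * a powi j) powr (\<zeta> - 1) * (exp (- (x * a powi j)) - 1 + x * a powi j)) \<partial>count_space UNIV) \<le> ennreal (Gamma (\<zeta> + 1) / (1 - a powr (-\<zeta>)) / (1 - \<zeta>))"
  proof (rule G_t[OF a x z(2), where f="\<lambda>v. v powr \<zeta> * (1 - exp (- v))" and g="\<lambda>u. u powr (\<zeta> - 1) * (exp (- u) - 1 + u)"])
    fix x' :: real assume "0 < x'"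
    thus "ennreal (a powr (-\<zeta>) * Gamma (\<zeta> + 1) / (1 - a powr (-\<zeta>))) \<le> (\<integral>\<^sup>+j. ennreal ((x' * a powi j) powr \<zeta> * (1 - exp (- (x' * a powi j)))) \<partial>count_space UNIV)
      \<and> (\<integral>\<^sup>+j. ennreal ((x' * a powi j) powr \<zeta> * (1 - exp (- (x' * a powi j)))) \<partial>count_space UNIV) \<le> ennreal (Gamma (\<zeta> + 1) / (1 - a powr (-\<zeta>)))"
      by (rule H2_bnd[OF a _ z])
  qed (use G A in \<open>auto simp: Gt2_rep\<close>)
  have r: "a powr (-\<zeta>) * Gamma (\<zeta> + 1) / (1 - a powr (-\<zeta>)) / (1 - \<zeta>) \<le> (\<Sum>\<^sub>\<infinity>j::int. (x * a powi j) powr (\<zeta> - 1) * (exp (- (x * a powi j)) - 1 + x * a powi j))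
    \<and> (\<Sum>\<^sub>\<infinity>j::int. (x * a powi j) powr (\<zeta> - 1) * (exp (- (x * a powi j)) - 1 + x * a powi j)) \<le> Gamma (\<zeta> + 1) / (1 - a powr (-\<zeta>)) / (1 - \<zeta>)"
    by (rule infsum_bounds_from_nn) (use bnd G A z pos_xa[OF x a(1)] in \<open>auto intro: g2_nonneg\<close>)
  thus ?thesis by (simp add: divide_divide_eq_left)
qed

lemma res_ht3:
  fixes a x \<zeta> :: real assumes a: "0 < a" "a < 1" and x: "0 < x" and z: "-1 < \<zeta>" "\<zeta> < 0"
  shows "a powr (-\<zeta>) * (2 - 2 powr (-\<zeta>)) * Gamma (\<zeta> + 1) / ((1 - a powr (-\<zeta>)) * (1 - \<zeta>)) \<le> (\<Sum>\<^sub>\<infinity>j::int. (x * a powi j) powr (\<zeta> - 1) * (2 * exp (- (x * a powi j)) - 1/2 * exp (- 2 * (x * a powi j)) + x * a powi j - 3/2))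
    \<and> (\<Sum>\<^sub>\<infinity>j::int. (x * a powi j) powr (\<zeta> - 1) * (2 * exp (- (x * a powi j)) - 1/2 * exp (- 2 * (x * a powi j)) + x * a powi j - 3/2)) \<le> (2 - 2 powr (-\<zeta>)) * Gamma (\<zeta> + 1) / ((1 - a powr (-\<zeta>)) * (1 - \<zeta>))"
proof -
  have G: "Gamma (\<zeta> + 1) > 0" using z by simp
  note A = A_facts[OF a z(2)]
  note T = two_fact[OF z(1)]
  have bnd: "ennreal (a powr (-\<zeta>) * ((2 - 2 powr (-\<zeta>)) * Gamma (\<zeta> + 1)) / (1 - a powr (-\<zeta>)) / (1 - \<zeta>)) \<le> (\<integral>\<^sup>+j. ennreal ((x * a powi j) powr (\<zeta> - 1) * (2 * exp (- (x * a powi j)) - 1/2 * exp (- 2 * (x * a powi j)) + x * a powi j - 3/2)) \<partial>count_space UNIV)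
     \<and> (\<integral>\<^sup>+j. ennreal ((x * a powi j) powr (\<zeta> - 1) * (2 * exp (- (x * a powi j)) - 1/2 * exp (- 2 * (x * a powi j)) + x * a powi j - 3/2)) \<partial>count_space UNIV) \<le> ennreal ((2 - 2 powr (-\<zeta>)) * Gamma (\<zeta> + 1) / (1 - a powr (-\<zeta>)) / (1 - \<zeta>))"
  proof (rule G_t[OF a x z(2), where f="\<lambda>v. v powr \<zeta> * (1 - exp (- v))\<^sup>2" and g="\<lambda>u. u powr (\<zeta> - 1) * (2 * exp (- u) - 1/2 * exp (- 2 * u) + u - 3/2)"])
    fix x' :: real assume "0 < x'"
    thus "ennreal (a powr (-\<zeta>) * ((2 - 2 powr (-\<zeta>)) * Gamma (\<zeta> + 1)) / (1 - a powr (-\<zeta>))) \<le> (\<integral>\<^sup>+j. ennreal ((x' * a powi j) powr \<zeta> * (1 - exp (- (x' * a powi j)))\<^sup>2) \<partial>count_space UNIV)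
      \<and> (\<integral>\<^sup>+j. ennreal ((x' * a powi j) powr \<zeta> * (1 - exp (- (x' * a powi j)))\<^sup>2) \<partial>count_space UNIV) \<le> ennreal ((2 - 2 powr (-\<zeta>)) * Gamma (\<zeta> + 1) / (1 - a powr (-\<zeta>)))"
      by (rule H3_bnd[OF a _ z])
  next
    fix u :: real assume "0 < u"
    thus "ennreal (u powr (\<zeta> - 1) * (2 * exp (- u) - 1/2 * exp (- 2 * u) + u - 3/2))
     = (\<integral>\<^sup>+s. ennreal (s powr (-\<zeta>) * ((u * s) powr \<zeta> * (1 - exp (- (u * s)))\<^sup>2)) * indicator {0..1} s \<partial>lborel)"
      by (rule Gt3_rep)
  qed (use G A T in auto)
  have r: "a powr (-\<zeta>) * ((2 - 2 powr (-\<zeta>)) * Gamma (\<zeta> + 1)) / (1 - a powr (-\<zeta>)) / (1 - \<zeta>) \<le> (\<Sum>\<^sub>\<infinity>j::int. (x * a powi j) powr (\<zeta> - 1) * (2 * exp (- (x * a powi j)) - 1/2 * exp (- 2 * (x * a powi j)) + x * a powi j - 3/2))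
    \<and> (\<Sum>\<^sub>\<infinity>j::int. (x * a powi j) powr (\<zeta> - 1) * (2 * exp (- (x * a powi j)) - 1/2 * exp (- 2 * (x * a powi j)) + x * a powi j - 3/2)) \<le> (2 - 2 powr (-\<zeta>)) * Gamma (\<zeta> + 1) / (1 - a powr (-\<zeta>)) / (1 - \<zeta>)"
    by (rule infsum_bounds_from_nn[OF g3_nonneg[OF pos_xa[OF x a(1)]]]) (use bnd G A T z in auto)
  thus ?thesis by (simp add: divide_divide_eq_left mult.assoc)
qed

theorem proposition3p1p1:
  fixes N :: nat and c \<sigma> a \<theta> \<zeta> t :: real
  assumes "N \<ge> 2" and "0 < c" and "c < real N" and "\<sigma> > 0"
    and "a = c / real N"
    and "\<theta> = \<sigma> * (real N ^ 2 / c - 1) / (real N - 1)"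
    and "t > 0"
  shows "(\<zeta> > 0 \<longrightarrow>
            Gamma (\<zeta> + 1) / (a powr (-\<zeta>) - 1) \<le> h1 a \<theta> \<zeta> t \<and>
            h1 a \<theta> \<zeta> t \<le> a powr (-\<zeta>) * Gamma (\<zeta> + 1) / (a powr (-\<zeta>) - 1))
       \<and> (-1 < \<zeta> \<and> \<zeta> < 0 \<longrightarrow>
            (a powr (-\<zeta>) * Gamma (\<zeta> + 1) / (1 - a powr (-\<zeta>)) \<le> h2 a \<theta> \<zeta> t \<and>
             h2 a \<theta> \<zeta> t \<le> Gamma (\<zeta> + 1) / (1 - a powr (-\<zeta>))) \<and>
            (a powr (-\<zeta>) * (2 - 2 powr (-\<zeta>)) * Gamma (\<zeta> + 1) / (1 - a powr (-\<zeta>)) \<le> h3 a \<theta> \<zeta> t \<and>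
             h3 a \<theta> \<zeta> t \<le> (2 - 2 powr (-\<zeta>)) * Gamma (\<zeta> + 1) / (1 - a powr (-\<zeta>))) \<and>
            (a powr (-\<zeta>) * Gamma (\<zeta> + 1) / ((1 - a powr (-\<zeta>)) * (1 - \<zeta>)) \<le> ht2 a \<theta> \<zeta> t \<and>
             ht2 a \<theta> \<zeta> t \<le> Gamma (\<zeta> + 1) / ((1 - a powr (-\<zeta>)) * (1 - \<zeta>))) \<and>
            (a powr (-\<zeta>) * (2 - 2 powr (-\<zeta>)) * Gamma (\<zeta> + 1) / ((1 - a powr (-\<zeta>)) * (1 - \<zeta>)) \<le> ht3 a \<theta> \<zeta> t \<and>
             ht3 a \<theta> \<zeta> t \<le> (2 - 2 powr (-\<zeta>)) * Gamma (\<zeta> + 1) / ((1 - a powr (-\<zeta>)) * (1 - \<zeta>))))"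
proof -
  have Npos: "(2::real) \<le> real N" using assms(1) by simp
  have a0: "0 < a" using assms(2,5) Npos by simp
  have a1: "a < 1" using assms(3,5) Npos by simp
  have "c < real N ^ 2"
  proof -
    have "real N \<le> real N ^ 2" using Npos by (simp add: power2_eq_square)
    thus ?thesis using assms(3) by linarith
  qed
  hence "1 < real N ^ 2 / c" using assms(2) by (simp add: less_divide_eq)
  hence th: "0 < \<theta>" using assms(4,6) Npos by simp
  define x where "x = \<theta> * t"
  have x: "0 < x" using th assms(7) by (simp add: x_def)
  have rw: "\<And>j. \<theta> * a powi j * t = x * a powi j" by (simp add: x_def ac_simps)
  have e1: "h1 a \<theta> \<zeta> t = (\<Sum>\<^sub>\<infinity>j::int. (x * a powi j) powr \<zeta> * exp (- (x * a powi j)))"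
    unfolding h1_def rw ..
  have e2: "h2 a \<theta> \<zeta> t = (\<Sum>\<^sub>\<infinity>j::int. (x * a powi j) powr \<zeta> * (1 - exp (- (x * a powi j))))"
    unfolding h2_def rw ..
  have e3: "h3 a \<theta> \<zeta> t = (\<Sum>\<^sub>\<infinity>j::int. (x * a powi j) powr \<zeta> * (1 - exp (- (x * a powi j)))\<^sup>2)"
    unfolding h3_def rw ..
  have e4: "ht2 a \<theta> \<zeta> t = (\<Sum>\<^sub>\<infinity>j::int. (x * a powi j) powr (\<zeta> - 1) * (exp (- (x * a powi j)) - 1 + x * a powi j))"
    unfolding ht2_def rw ..
  have e5: "ht3 a \<theta> \<zeta> t = (\<Sum>\<^sub>\<infinity>j::int. (x * a powi j) powr (\<zeta> - 1) * (2 * exp (- (x * a powi j)) - 1/2 * exp (- 2 * (x * a powi j)) + x * a powi j - 3/2))"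
    unfolding ht3_def rw ..
  show ?thesis unfolding e1 e2 e3 e4 e5
    using res_h1[OF a0 a1 x] res_h2[OF a0 a1 x] res_h3[OF a0 a1 x] res_ht2[OF a0 a1 x] res_ht3[OF a0 a1 x]
    by blast
qed

end
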